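(* Let $P\subset\mathbb R^d$ be a rational $d$-polytope, $\bm a\in N(P)$, and $F$ the facet of $P$ with inner normal vector $\bm a$. Let $k\in\mathbb Z$ and let $\bm v\in H_{\bm a,k}$ be generic in $\mathcal A_P$, i.e. $\bm v\notin H$ for every $H\in\mathcal A_P$ with $H\neq H_{\bm a,k}$. Then for every sufficiently small $\varepsilon>0$: (1) $\mathrm{TL}_{P,\bm v}(t)-\mathrm{TL}_{P,\bm v+\varepsilon\bm a}(t)=\mathrm{TL}_{F,\bm v}(t)$ for all $t\in\mathbb Z_{\ge0}$, and $\mathrm{TL}_{F,\bm v}$ is not identically zero; (2) if there is no real $c>0$ with $-c\bm a\in N(P)$, then $\mathrm{TL}_{P,\bm v}(t)=\mathrm{TL}_{P,\bm v-\varepsilon\bm a}(t)$ for all $t\in\mathbb Z_{\ge0}$.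
   Context: $P=\bigcap_{i=1}^m\{\bm x:(\bm a_i,\bm x)\ge b_i\}$ is the unique irredundant presentation with $(\bm a_i,b_i)\in\mathbb Z^{d+1}$ primitive; $N(P)=\{\bm a_1,\dots,\bm a_m\}$, and the facet with normal $\bm a_i$ is $P\cap\{(\bm a_i,\bm x)=b_i\}$. $H_{\bm a,k}=\{\bm x:(\bm a,\bm x)=k\}$, $\mathcal A_P=\{H_{\bm a_i,k}:i\le m,k\in\mathbb Z\}$. $\mathrm{TL}_{X,\bm v}(t)=\#((tX+\bm v)\cap\mathbb Z^d)$. *)

theory Defs
  imports "HOL-Analysis.Analysis"
begin

definition int_vec :: "real^'n \<Rightarrow> bool" where
  "int_vec x \<longleftrightarrow> (\<forall>i. x $ i \<in> \<int>)"

definition rat_vec :: "real^'n \<Rightarrow> bool" where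
  "rat_vec x \<longleftrightarrow> (\<forall>i. x $ i \<in> \<rat>)"

definition rational_full_polytope :: "(real^'n) set \<Rightarrow> bool" where
  "rational_full_polytope P \<longleftrightarrow>
     (\<exists>V. finite V \<and> (\<forall>v\<in>V. rat_vec v) \<and> P = convex hull V) \<and>
     aff_dim P = int CARD('n)"

definition primitive_pair :: "real^'n \<Rightarrow> real \<Rightarrow> bool" where
  "primitive_pair a b \<longleftrightarrow> int_vec a \<and> b \<in> \<int> \<and>
     (\<forall>m::int. m > 1 \<longrightarrow> \<not> (b / of_int m \<in> \<int> \<and> (\<forall>i. a $ i / of_int m \<in> \<int>)))"

text \<open>(a,b) is one of the inequalities (a,x) \<ge> b of the unique irredundant
  presentation of P with primitive integer (a,b): it is valid on P and cuts out a facet.\<close>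
definition in_presentation :: "(real^'n) set \<Rightarrow> real^'n \<Rightarrow> real \<Rightarrow> bool" where
  "in_presentation P a b \<longleftrightarrow> primitive_pair a b \<and>
     P \<subseteq> {x. a \<bullet> x \<ge> b} \<and> (P \<inter> {x. a \<bullet> x = b}) facet_of P"

definition normals :: "(real^'n) set \<Rightarrow> (real^'n) set" where
  "normals P = {a. \<exists>b. in_presentation P a b}"

definition hyp :: "real^'n \<Rightarrow> real \<Rightarrow> (real^'n) set" where
  "hyp a k = {x. a \<bullet> x = k}"

definition arrangement :: "(real^'n) set \<Rightarrow> (real^'n) set set" where
  "arrangement P = {hyp a (of_int k) | a k. a \<in> normals P}"

definition TL :: "(real^'n) set \<Rightarrow> real^'n \<Rightarrow> nat \<Rightarrow> nat" where
  "TL X v t = card ((\<lambda>x. real t *\<^sub>R x + v) ` X \<inter> {z. int_vec z})"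

end

theory Submission
  imports Defs
begin

lemma rat_det:
  fixes M :: "real^'n^'n"
  assumes "\<And>i j. M$i$j \<in> \<rat>"
  shows "det M \<in> \<rat>"
  unfolding det_def using assms by (intro Rats_sum Rats_mult Rats_prod) auto

lemma rat_orth:
  fixes B :: "(real^'n) set"
  assumes indep: "independent B" and cardB: "card B = CARD('n) - 1"
    and rat: "\<forall>w\<in>B. rat_vec w"
  shows "\<exists>c. rat_vec c \<and> c \<noteq> 0 \<and> (\<forall>w\<in>B. c \<bullet> w = 0)"
proof -
  have finB: "finite B" using indep finiteI_independent by blast
  obtain i0 :: 'n where True by simp
  have "card (UNIV - {i0}) = CARD('n) - 1" by (simp add: card_Diff_singleton)
  then obtain g where g: "bij_betw g (UNIV - {i0}) B"
    using finite_same_card_bij[of "UNIV - {i0}" B] finB cardB by auto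
  define M where "M x = (\<chi> i. if i = i0 then x else g i)" for x :: "real^'n"
  define c where "c = (\<chi> j. det (M (axis j 1)))"
  have lin: "det (M x) = c \<bullet> x" for x
  proof -
    have "det (M x) = det (\<chi> i. if i = i0 then sum (\<lambda>j. (x$j) *s axis j 1) UNIV else g i)"
      by (simp only: M_def basis_expansion)
    also have "\<dots> = (\<Sum>j\<in>UNIV. det (\<chi> i. if i = i0 then (x$j) *s axis j 1 else g i))"
      by (rule det_linear_row_sum) simp
    also have "\<dots> = (\<Sum>j\<in>UNIV. x$j * c$j)"
      by (simp add: det_row_mul c_def M_def)
    finally show ?thesis by (simp add: inner_vec_def mult.commute)
  qed
  have crat: "rat_vec c"
    unfolding rat_vec_def c_def
  proof
    fix j show "(\<chi> j. det (M (axis j 1))) $ j \<in> \<rat>"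
      using g rat by (auto intro!: rat_det simp: M_def axis_def rat_vec_def bij_betw_def)
  qed
  have orth: "\<forall>w\<in>B. c \<bullet> w = 0"
  proof
    fix w assume "w \<in> B"
    then obtain i1 where i1: "i1 \<in> UNIV - {i0}" "g i1 = w"
      using g by (auto simp: bij_betw_def)
    have "det (M w) = 0"
      by (rule det_identical_rows[of i0 i1]) (use i1 in \<open>auto simp: M_def row_def vec_eq_iff\<close>)
    then show "c \<bullet> w = 0" using lin by simp
  qed
  have "span B \<noteq> UNIV"
  proof
    assume "span B = UNIV"
    then have "dim (UNIV :: (real^'n) set) = dim B" by (metis dim_span)
    then have "CARD('n) = card B" using indep dim_eq_card_independent by simp
    moreover have "CARD('n) > 0" by simp
    ultimately show False using cardB by linarith
  qed
  then obtain x where x: "x \<notin> span B" by auto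
  have rows: "rows (M x) = insert x B"
    using g unfolding rows_def row_def M_def bij_betw_def
    by (auto simp: vec_lambda_eta)
  have "independent (insert x B)" using indep x by (simp add: independent_insert)
  then have "rank (M x) = CARD('n)"
    by (metis rows row_rank_def dim_eq_card_independent cardB card_insert_disjoint finB x span_base
         Suc_pred' zero_less_card_finite finite_UNIV)
  then have "det (M x) \<noteq> 0" by (simp add: det_eq_0_rank)
  then have "c \<noteq> 0" using lin by auto
  with crat orth show ?thesis by blast
qed

lemma orth_parallel:
  fixes a c :: "'a::real_inner"
  assumes "a \<noteq> 0" "\<And>y. a \<bullet> y = 0 \<Longrightarrow> c \<bullet> y = 0"
  shows "c = ((c \<bullet> a) / (a \<bullet> a)) *\<^sub>R a"
proof -
  define \<mu> where "\<mu> = (c \<bullet> a) / (a \<bullet> a)"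
  define w where "w = c - \<mu> *\<^sub>R a"
  have aa: "a \<bullet> a \<noteq> 0" using assms by simp
  have "a \<bullet> w = 0" using aa by (simp add: w_def \<mu>_def inner_diff_right inner_commute)
  then have "c \<bullet> w = 0" using assms by blast
  then have "w \<bullet> w = 0" using \<open>a \<bullet> w = 0\<close> by (simp add: w_def inner_diff_left)
  then have "w = 0" by simp
  then show ?thesis by (simp add: w_def \<mu>_def)
qed

lemma rat_vec_diff: "rat_vec x \<Longrightarrow> rat_vec y \<Longrightarrow> rat_vec (x - y)"
  by (simp add: rat_vec_def Rats_diff)

lemma rat_inner: "rat_vec x \<Longrightarrow> rat_vec y \<Longrightarrow> x \<bullet> y \<in> \<rat>"
  by (auto simp: rat_vec_def inner_vec_def intro!: Rats_sum Rats_mult)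

lemma int_inner: "int_vec x \<Longrightarrow> int_vec y \<Longrightarrow> x \<bullet> y \<in> \<int>"
  by (auto simp: int_vec_def inner_vec_def intro!: Ints_sum Ints_mult)

lemma facet_rat_normal:
  fixes P C :: "(real^'n) set"
  assumes V: "finite V" "\<forall>v\<in>V. rat_vec v" "P = convex hull V"
    and full: "aff_dim P = int CARD('n)"
    and C: "C facet_of P" and al: "\<alpha> \<noteq> 0" "C = P \<inter> {x. \<alpha> \<bullet> x = \<beta>}"
  shows "\<exists>l. l \<noteq> 0 \<and> rat_vec (l *\<^sub>R \<alpha>) \<and> l * \<beta> \<in> \<rat>"
proof -
  have "C face_of convex hull V" using C V by (simp add: facet_of_def)
  then obtain VC where VC: "VC \<subseteq> V" "C = convex hull VC"
    using face_of_convex_hull_subset[of V C] V finite_imp_compact by blast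
  have Cne: "C \<noteq> {}" and affC: "aff_dim C = aff_dim P - 1" using C by (auto simp: facet_of_def)
  then obtain p1 where p1: "p1 \<in> VC" using VC by auto
  define W where "W = (\<lambda>x. x - p1) ` VC"
  have "aff_dim C = int (dim W)"
    unfolding VC(2) aff_dim_convex_hull W_def
    by (rule aff_dim_eq_dim_subtract) (use p1 in \<open>simp add: hull_inc\<close>)
  with affC full have dimW: "dim W = CARD('n) - 1" by simp
  obtain B where B: "B \<subseteq> W" "independent B" "W \<subseteq> span B" "card B = dim W"
    using basis_exists by blast
  have Brat: "\<forall>w\<in>B. rat_vec w"
    using B(1) VC(1) V(2) p1 by (auto simp: W_def intro!: rat_vec_diff)
  obtain c where c: "rat_vec c" "c \<noteq> 0" "\<forall>w\<in>B. c \<bullet> w = 0"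
    using rat_orth[OF B(2)] B(4) dimW Brat by auto
  have "span B \<subseteq> {y. c \<bullet> y = 0}"
    by (rule span_minimal) (use c in \<open>auto simp: subspace_hyperplane\<close>)
  moreover have "span W \<subseteq> span B" using B(3) by (simp add: span_minimal)
  moreover have C_hyp: "C \<subseteq> {x. \<alpha> \<bullet> x = \<beta>}" using al by auto
  have p1C: "p1 \<in> C" using p1 VC hull_inc by auto
  have "W \<subseteq> {y. \<alpha> \<bullet> y = 0}"
  proof
    fix y assume "y \<in> W"
    then obtain x where x: "x \<in> VC" "y = x - p1" by (auto simp: W_def)
    have "x \<in> C" using x(1) VC(2) hull_inc by auto
    then have "\<alpha> \<bullet> x = \<beta>" "\<alpha> \<bullet> p1 = \<beta>" using C_hyp p1C by auto
    then show "y \<in> {y. \<alpha> \<bullet> y = 0}" using x(2) by (simp add: inner_diff_right)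
  qed
  then have sWsub: "span W \<subseteq> {y. \<alpha> \<bullet> y = 0}" by (simp add: span_minimal subspace_hyperplane)
  have "span W = {y. \<alpha> \<bullet> y = 0}"
  proof (rule subspace_dim_equal)
    show "subspace (span W)" by (rule subspace_span)
    show "subspace {y. \<alpha> \<bullet> y = 0}" by (rule subspace_hyperplane)
    show "span W \<subseteq> {y. \<alpha> \<bullet> y = 0}" by (rule sWsub)
    have "dim {y. \<alpha> \<bullet> y = 0} = CARD('n) - 1" using dim_hyperplane[OF al(1)] by simp
    then show "dim {y. \<alpha> \<bullet> y = 0} \<le> dim (span W)" using dimW by (simp add: dim_span)
  qed
  ultimately have "\<And>y. \<alpha> \<bullet> y = 0 \<Longrightarrow> c \<bullet> y = 0" by blast
  then have ceq: "c = ((c \<bullet> \<alpha>) / (\<alpha> \<bullet> \<alpha>)) *\<^sub>R \<alpha>" by (rule orth_parallel[OF al(1)])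
  define l where "l = (c \<bullet> \<alpha>) / (\<alpha> \<bullet> \<alpha>)"
  have "l \<noteq> 0" using ceq c(2) by (auto simp: l_def)
  moreover have "rat_vec (l *\<^sub>R \<alpha>)" using ceq c(1) by (simp add: l_def)
  moreover have "c \<bullet> p1 = l * (\<alpha> \<bullet> p1)" using ceq by (metis l_def inner_scaleR_left)
  then have "l * \<beta> = c \<bullet> p1" using C_hyp p1C by auto
  then have "l * \<beta> \<in> \<rat>" using rat_inner c(1) p1 VC V(2) by auto
  ultimately show ?thesis by blast
qed

lemma Rats_denom: "x \<in> \<rat> \<Longrightarrow> \<exists>q::int. q > 0 \<and> of_int q * x \<in> \<int>"
proof -
  assume "x \<in> \<rat>"
  then obtain a b :: int where "b > 0" "x = of_int a / of_int b" by (rule Rats_cases')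
  then show ?thesis by (intro exI[of _ b]) auto
qed

lemma int_scale:
  fixes c :: "real^'n"
  assumes "rat_vec c" "d \<in> \<rat>"
  shows "\<exists>N::int. N > 0 \<and> int_vec (of_int N *\<^sub>R c) \<and> of_int N * d \<in> \<int>"
proof -
  have "\<forall>i. \<exists>q::int. q > 0 \<and> of_int q * c$i \<in> \<int>" using assms Rats_denom by (auto simp: rat_vec_def)
  then obtain q where q: "\<And>i. q i > 0" "\<And>i. of_int (q i) * c$i \<in> \<int>" by metis
  obtain qd :: int where qd: "qd > 0" "of_int qd * d \<in> \<int>" using Rats_denom assms(2) by blast
  define N where "N = (\<Prod>i\<in>UNIV. q i) * qd"
  have "N > 0" using q qd by (simp add: N_def prod_pos)
  moreover have "of_int N * c$i \<in> \<int>" for i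
  proof -
    have "N = q i * ((\<Prod>j\<in>UNIV-{i}. q j) * qd)"
      by (simp add: N_def prod.remove[of UNIV i])
    then have "of_int N * c$i = (of_int (q i) * c$i) * of_int ((\<Prod>j\<in>UNIV-{i}. q j) * qd)"
      by simp
    then show ?thesis using q(2)[of i] by (metis Ints_mult Ints_of_int)
  qed
  moreover have "of_int N * d \<in> \<int>"
  proof -
    have "of_int N * d = of_int (\<Prod>i\<in>UNIV. q i) * (of_int qd * d)" by (simp add: N_def)
    then show ?thesis using qd by (metis Ints_mult Ints_of_int)
  qed
  ultimately show ?thesis by (intro exI[of _ N]) (auto simp: int_vec_def)
qed

lemma primitive_exists:
  fixes a :: "real^'n"
  assumes a: "int_vec a" "a \<noteq> 0" and b: "b \<in> \<int>"
  shows "\<exists>s>0. primitive_pair (s *\<^sub>R a) (s * b)"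
proof -
  obtain j where j: "a$j \<noteq> 0" using a(2) by (metis vec_eq_iff zero_index)
  define A where "A = \<bar>a$j\<bar>"
  have Apos: "A > 0" using j by (simp add: A_def)
  have AI: "A \<in> \<int>" using a(1) by (simp add: A_def int_vec_def)
  define S where "S n \<longleftrightarrow> n > 0 \<and> (\<forall>i. (real n / A) * a$i \<in> \<int>) \<and> (real n / A) * b \<in> \<int>" for n :: nat
  obtain nA :: nat where nA: "real nA = A" using AI Apos
    by (metis Ints_cases of_int_of_nat_eq of_int_less_0_iff not_less zero_le_imp_eq_int less_imp_le)
  have "S nA" using nA Apos a(1) b by (auto simp: S_def int_vec_def)
  define n0 where "n0 = (LEAST n. S n)"
  have Sn0: "S n0" unfolding n0_def using \<open>S nA\<close> by (rule LeastI)
  have n0pos: "n0 > 0" and n0a: "\<And>i. (real n0 / A) * a$i \<in> \<int>" and n0b: "(real n0 / A) * b \<in> \<int>"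
    using Sn0 unfolding S_def by auto
  define s where "s = real n0 / A"
  have "s > 0" using n0pos Apos by (simp add: s_def)
  moreover have "primitive_pair (s *\<^sub>R a) (s * b)"
    unfolding primitive_pair_def
  proof (intro conjI allI impI)
    show "int_vec (s *\<^sub>R a)" using n0a by (simp add: int_vec_def s_def)
    show "s * b \<in> \<int>" using n0b by (simp add: s_def)
    fix m :: int assume m: "m > 1"
    show "\<not> (s * b / of_int m \<in> \<int> \<and> (\<forall>i. (s *\<^sub>R a) $ i / of_int m \<in> \<int>))"
    proof
      assume H: "s * b / of_int m \<in> \<int> \<and> (\<forall>i. (s *\<^sub>R a) $ i / of_int m \<in> \<int>)"
      have "s * a$j / of_int m \<in> \<int>" using H by simp
      moreover have "\<bar>s * a$j / of_int m\<bar> = real n0 / of_int m"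
        using Apos m by (simp add: s_def A_def abs_mult)
      ultimately have q: "real n0 / of_int m \<in> \<int>" by (metis Ints_abs)
      then obtain n' :: int where n': "real n0 / of_int m = of_int n'" by (auto elim: Ints_cases)
      have "n' > 0" using n' m n0pos
        by (metis divide_pos_pos of_int_0_less_iff of_nat_0_less_iff zero_less_one less_trans)
      define n'' where "n'' = nat n'"
      have rn: "real n'' = real n0 / of_int m" using n' \<open>n' > 0\<close> by (simp add: n''_def)
      have "S n''"
        unfolding S_def
      proof (intro conjI allI)
        show "n'' > 0" using \<open>n' > 0\<close> by (simp add: n''_def)
        fix i show "real n'' / A * a $ i \<in> \<int>" using H rn by (simp add: s_def field_simps)
      next
        show "real n'' / A * b \<in> \<int>" using H rn by (simp add: s_def field_simps)
      qed
      moreover have "n'' < n0"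
      proof -
        have "real n0 / of_int m < real n0" using m n0pos by (simp add: divide_less_eq)
        then show ?thesis using rn by linarith
      qed
      ultimately show False using not_less_Least n0_def by blast
    qed
  qed
  ultimately show ?thesis by blast
qed

lemma facet_presentation:
  fixes P :: "(real^'n) set"
  assumes rfp: "rational_full_polytope P" and al: "\<alpha> \<noteq> 0" "P \<subseteq> {x. \<alpha> \<bullet> x \<le> \<beta>}"
    and fac: "(P \<inter> {x. \<alpha> \<bullet> x = \<beta>}) facet_of P"
  shows "\<exists>\<mu><0. in_presentation P (\<mu> *\<^sub>R \<alpha>) (\<mu> * \<beta>)"
proof -
  obtain V where V: "finite V" "\<forall>v\<in>V. rat_vec v" "P = convex hull V" and full: "aff_dim P = int CARD('n)"
    using rfp by (auto simp: rational_full_polytope_def)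
  obtain l where l: "l \<noteq> 0" "rat_vec (l *\<^sub>R \<alpha>)" "l * \<beta> \<in> \<rat>"
    using facet_rat_normal[OF V full fac al(1) refl] by blast
  define \<kappa> where "\<kappa> = - \<bar>l\<bar>"
  have k: "\<kappa> < 0" using l by (simp add: \<kappa>_def)
  have kr: "rat_vec (\<kappa> *\<^sub>R \<alpha>)" "\<kappa> * \<beta> \<in> \<rat>"
    using l by (auto simp: \<kappa>_def rat_vec_def abs_if)
  obtain N :: int where N: "N > 0" "int_vec (of_int N *\<^sub>R (\<kappa> *\<^sub>R \<alpha>))" "of_int N * (\<kappa> * \<beta>) \<in> \<int>"
    using int_scale[OF kr] by blast
  have nz: "of_int N *\<^sub>R (\<kappa> *\<^sub>R \<alpha>) \<noteq> 0" using N(1) k al(1) by simp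
  obtain s where s: "s > 0" "primitive_pair (s *\<^sub>R (of_int N *\<^sub>R (\<kappa> *\<^sub>R \<alpha>))) (s * (of_int N * (\<kappa> * \<beta>)))"
    using primitive_exists[OF N(2) nz N(3)] by blast
  define \<mu> where "\<mu> = s * of_int N * \<kappa>"
  have mu: "\<mu> < 0" using s N k by (simp add: \<mu>_def mult_pos_neg)
  have pp: "primitive_pair (\<mu> *\<^sub>R \<alpha>) (\<mu> * \<beta>)" using s(2) by (simp add: \<mu>_def mult.assoc)
  have sub: "P \<subseteq> {x. (\<mu> *\<^sub>R \<alpha>) \<bullet> x \<ge> \<mu> * \<beta>}"
    using al(2) mu by (auto simp: mult_le_cancel_left)
  have "P \<inter> {x. (\<mu> *\<^sub>R \<alpha>) \<bullet> x = \<mu> * \<beta>} = P \<inter> {x. \<alpha> \<bullet> x = \<beta>}"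
    using mu by auto
  then have "in_presentation P (\<mu> *\<^sub>R \<alpha>) (\<mu> * \<beta>)"
    using pp sub fac by (simp add: in_presentation_def)
  with mu show ?thesis by blast
qed

lemma repr:
  fixes P :: "(real^'n) set"
  assumes rfp: "rational_full_polytope P"
  shows "\<exists>Q. finite Q \<and> (\<forall>(a,b)\<in>Q. in_presentation P a b) \<and> P = {x. \<forall>(a,b)\<in>Q. a \<bullet> x \<ge> b}"
proof -
  obtain V where V: "finite V" "P = convex hull V" and full: "aff_dim P = int CARD('n)"
    using rfp by (auto simp: rational_full_polytope_def)
  have "polytope P" using V by (auto simp: polytope_def)
  then have "polyhedron P" by (rule polytope_imp_polyhedron)
  then obtain F where F: "finite F" "P = affine hull P \<inter> \<Inter>F"
    and faces: "\<And>h. h \<in> F \<Longrightarrow> \<exists>a b. a \<noteq> 0 \<and> h = {x. a \<bullet> x \<le> b}"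
    and min: "\<And>F'. F' \<subset> F \<Longrightarrow> P \<subset> (affine hull P) \<inter> \<Inter>F'"
    by (simp add: polyhedron_Int_affine_minimal) meson
  then obtain \<alpha> \<beta> where ab: "\<And>h. h \<in> F \<Longrightarrow> \<alpha> h \<noteq> 0 \<and> h = {x. \<alpha> h \<bullet> x \<le> \<beta> h}"
    by metis
  have fa: "(C facet_of P) \<longleftrightarrow> (\<exists>h. h \<in> F \<and> C = P \<inter> {x. \<alpha> h \<bullet> x = \<beta> h})" for C
    by (rule facet_of_polyhedron_explicit [OF F ab min])
  have aUNIV: "affine hull P = UNIV" using full aff_dim_eq_full[of P] by simp
  have "\<forall>h\<in>F. \<exists>\<mu><0. in_presentation P (\<mu> *\<^sub>R \<alpha> h) (\<mu> * \<beta> h)"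
  proof
    fix h assume h: "h \<in> F"
    have "P \<subseteq> {x. \<alpha> h \<bullet> x \<le> \<beta> h}" using F(2) h ab by blast
    moreover have "(P \<inter> {x. \<alpha> h \<bullet> x = \<beta> h}) facet_of P" using fa h by blast
    ultimately show "\<exists>\<mu><0. in_presentation P (\<mu> *\<^sub>R \<alpha> h) (\<mu> * \<beta> h)"
      using facet_presentation[OF rfp] ab h by blast
  qed
  then obtain \<mu> where mu: "\<And>h. h \<in> F \<Longrightarrow> \<mu> h < 0 \<and> in_presentation P (\<mu> h *\<^sub>R \<alpha> h) (\<mu> h * \<beta> h)"
    by metis
  define Q where "Q = (\<lambda>h. (\<mu> h *\<^sub>R \<alpha> h, \<mu> h * \<beta> h)) ` F"
  have "finite Q" using F by (simp add: Q_def)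
  moreover have "\<forall>(a,b)\<in>Q. in_presentation P a b" using mu by (auto simp: Q_def)
  moreover have "P = {x. \<forall>(a,b)\<in>Q. a \<bullet> x \<ge> b}"
  proof
    show "P \<subseteq> {x. \<forall>(a,b)\<in>Q. a \<bullet> x \<ge> b}"
    proof
      fix x assume x: "x \<in> P"
      have "(\<mu> h *\<^sub>R \<alpha> h) \<bullet> x \<ge> \<mu> h * \<beta> h" if h: "h \<in> F" for h
      proof -
        have "in_presentation P (\<mu> h *\<^sub>R \<alpha> h) (\<mu> h * \<beta> h)" using mu[OF h] by blast
        then have "P \<subseteq> {x. (\<mu> h *\<^sub>R \<alpha> h) \<bullet> x \<ge> \<mu> h * \<beta> h}" unfolding in_presentation_def by blast
        then show ?thesis using x by blast
      qed
      then show "x \<in> {x. \<forall>(a,b)\<in>Q. a \<bullet> x \<ge> b}" by (auto simp: Q_def simp del: inner_scaleR_left)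
    qed
    show "{x. \<forall>(a,b)\<in>Q. a \<bullet> x \<ge> b} \<subseteq> P"
    proof
      fix x assume x: "x \<in> {x. \<forall>(a,b)\<in>Q. a \<bullet> x \<ge> b}"
      have "x \<in> h" if h: "h \<in> F" for h
      proof -
        have "\<mu> h * (\<alpha> h \<bullet> x) \<ge> \<mu> h * \<beta> h" using x h by (auto simp: Q_def)
        then have "\<alpha> h \<bullet> x \<le> \<beta> h" using mu[OF h] by (simp add: mult_le_cancel_left)
        then show ?thesis using ab[OF h] by blast
      qed
      then show "x \<in> P" using F(2) aUNIV by blast
    qed
  qed
  ultimately show ?thesis by blast
qed

lemma pres_basic:
  fixes P :: "(real^'n) set"
  assumes "in_presentation P a b"
  shows "int_vec a" "b \<in> \<int>" "a \<noteq> 0" "\<exists>y\<in>P. a \<bullet> y = b" "P \<subseteq> {x. a \<bullet> x \<ge> b}"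
proof -
  have pp: "primitive_pair a b" and sub: "P \<subseteq> {x. a \<bullet> x \<ge> b}"
    and fac: "(P \<inter> {x. a \<bullet> x = b}) facet_of P"
    using assms by (auto simp: in_presentation_def)
  show "int_vec a" "b \<in> \<int>" using pp by (auto simp: primitive_pair_def)
  show "P \<subseteq> {x. a \<bullet> x \<ge> b}" by (rule sub)
  have ne: "P \<inter> {x. a \<bullet> x = b} \<noteq> {}" using fac by (simp add: facet_of_def)
  then show "\<exists>y\<in>P. a \<bullet> y = b" by auto
  show "a \<noteq> 0"
  proof
    assume "a = 0"
    then have "P \<inter> {x. a \<bullet> x = b} = P" using ne by auto
    then show False using fac by simp
  qed
qed

lemma finite_lattice:
  fixes S :: "(real^'n) set"
  assumes "bounded S"
  shows "finite (S \<inter> {z. int_vec z})"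
proof -
  obtain r where r: "\<And>x. x \<in> S \<Longrightarrow> norm x \<le> r" using assms by (auto simp: bounded_iff)
  define R where "R = \<lceil>r\<rceil>"
  have "S \<inter> {z. int_vec z} \<subseteq> (\<lambda>f. \<chi> i. of_int (f i)) ` (\<Pi>\<^sub>E i\<in>UNIV. {-R..R})"
  proof
    fix z assume z: "z \<in> S \<inter> {z. int_vec z}"
    define f where "f i = \<lfloor>z$i\<rfloor>" for i
    have "z = (\<chi> i. of_int (f i))" using z by (auto simp: vec_eq_iff f_def int_vec_def)
    moreover have "f \<in> (\<Pi>\<^sub>E i\<in>UNIV. {-R..R})"
    proof -
      have "\<bar>z$i\<bar> \<le> r" for i using z r component_le_norm_cart[of z i] by force
      moreover have "of_int (f i) = z$i" for i using z by (auto simp: f_def int_vec_def)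
      moreover have "r \<le> of_int R" by (simp add: R_def)
      ultimately have "\<bar>of_int (f i)\<bar> \<le> (of_int R :: real)" for i by (metis order_trans)
      then have ab: "\<bar>f i\<bar> \<le> R" for i by (metis of_int_abs of_int_le_iff)
      have "f i \<in> {-R..R}" for i using ab[of i] by (auto simp: abs_le_iff)
      then show ?thesis by auto
    qed
    ultimately show "z \<in> (\<lambda>f. \<chi> i. of_int (f i)) ` (\<Pi>\<^sub>E i\<in>UNIV. {-R..R})" by blast
  qed
  moreover have "finite (\<Pi>\<^sub>E i\<in>(UNIV::'n set). {-R..R})" by (intro finite_PiE) auto
  ultimately show ?thesis by (meson finite_imageI finite_subset)
qed

lemma bounded_aff_image:
  fixes S :: "(real^'n) set"
  assumes "bounded S"
  shows "bounded ((\<lambda>x. c *\<^sub>R x + v) ` S)"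
proof -
  have "(\<lambda>x. c *\<^sub>R x + v) ` S = (+) v ` ((*\<^sub>R) c ` S)" by (auto simp: image_image add.commute)
  then show ?thesis using assms by (simp add: bounded_scaling bounded_translation)
qed

lemma bezout_set:
  fixes f :: "'a \<Rightarrow> int"
  assumes "finite J"
  shows "\<exists>g h. (\<Sum>j\<in>J. g j * f j) + h * c = Gcd (insert c (f ` J))"
  using assms
proof (induction J rule: finite_induct)
  case empty
  have "sgn c * c = \<bar>c\<bar>" by (metis abs_sgn mult.commute)
  then show ?case by (intro exI[of _ "\<lambda>_. 0"] exI[of _ "sgn c"]) simp
next
  case (insert x J)
  then obtain g h where gh: "(\<Sum>j\<in>J. g j * f j) + h * c = Gcd (insert c (f ` J))" by blast
  obtain u w where uw: "u * f x + w * Gcd (insert c (f ` J)) = gcd (f x) (Gcd (insert c (f ` J)))"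
    using bezout_int by blast
  define g' where "g' = (\<lambda>j. if j = x then u else w * g j)"
  have "(\<Sum>j\<in>insert x J. g' j * f j) = u * f x + (\<Sum>j\<in>J. w * g j * f j)"
    using insert by (simp add: g'_def) (intro sum.cong, auto)
  also have "(\<Sum>j\<in>J. w * g j * f j) = w * (\<Sum>j\<in>J. g j * f j)" by (simp add: sum_distrib_left mult.assoc)
  finally have "(\<Sum>j\<in>insert x J. g' j * f j) + (w * h) * c = u * f x + w * ((\<Sum>j\<in>J. g j * f j) + h * c)"
    by (simp add: algebra_simps)
  also have "\<dots> = u * f x + w * Gcd (insert c (f ` J))" by (simp only: gh)
  also have "\<dots> = gcd (f x) (Gcd (insert c (f ` J)))" by (rule uw)
  also have "\<dots> = Gcd (insert c (f ` insert x J))"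
  proof -
    have "insert c (f ` insert x J) = insert (f x) (insert c (f ` J))" by auto
    then show ?thesis by (simp only: Gcd_insert)
  qed
  finally show ?case by blast
qed

lemma lattice_hyp:
  fixes a :: "real^'n"
  assumes pp: "primitive_pair a b" and a0: "a \<noteq> 0"
  shows "\<exists>t\<ge>N. \<exists>z. int_vec z \<and> a \<bullet> z = real t * b + of_int k"
proof -
  define A where "A j = \<lfloor>a$j\<rfloor>" for j
  define B where "B = \<lfloor>b\<rfloor>"
  have aA: "a$j = of_int (A j)" for j using pp by (auto simp: A_def primitive_pair_def int_vec_def)
  have bB: "b = of_int B" using pp by (auto simp: B_def primitive_pair_def)
  define G where "G = Gcd (insert B (A ` UNIV))"
  obtain g h where gh: "(\<Sum>j\<in>UNIV. g j * A j) + h * B = G"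
    using bezout_set[of UNIV A B] by (auto simp: G_def)
  have G1: "G = 1"
  proof -
    have "G \<ge> 0" by (simp add: G_def)
    moreover have "G \<noteq> 0"
    proof
      assume "G = 0"
      then have "A j = 0" for j by (auto simp: G_def Gcd_0_iff)
      then have "a = 0" using aA by (simp add: vec_eq_iff)
      with a0 show False by simp
    qed
    moreover have "\<not> G > 1"
    proof
      assume G: "G > 1"
      have "G dvd B" unfolding G_def by (rule Gcd_dvd) simp
      have "G dvd A j" for j unfolding G_def by (rule Gcd_dvd) simp
      have d1: "b / of_int G \<in> \<int>" using \<open>G dvd B\<close> G by (auto simp: bB elim!: dvdE)
      have d2: "a$i / of_int G \<in> \<int>" for i using \<open>G dvd A i\<close> G by (auto simp: aA elim!: dvdE)
      have "b / of_int G \<in> \<int> \<and> (\<forall>i. a $ i / of_int G \<in> \<int>)" using d1 d2 by blast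
      then show False using pp G by (auto simp: primitive_pair_def)
    qed
    ultimately show ?thesis by linarith
  qed
  define z0 where "z0 = (\<chi> j. (of_int (k * g j) :: real))"
  have s0: "a \<bullet> z0 = of_int k * (\<Sum>j\<in>UNIV. real_of_int (A j) * real_of_int (g j))"
    by (simp add: inner_vec_def z0_def aA sum_distrib_left mult_ac)
  have "(\<Sum>j\<in>UNIV. g j * A j) + h * B = 1" using gh G1 by simp
  then have "real_of_int ((\<Sum>j\<in>UNIV. g j * A j) + h * B) = 1" by simp
  then have "(\<Sum>j\<in>UNIV. real_of_int (g j) * real_of_int (A j)) + of_int h * b = 1" by (simp add: bB)
  then have s1: "(\<Sum>j\<in>UNIV. real_of_int (A j) * real_of_int (g j)) = 1 - of_int h * b"
    by (simp add: mult.commute)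
  have "a \<bullet> z0 = of_int k * (1 - of_int h * b)" by (simp only: s0 s1)
  then have az0: "a \<bullet> z0 = of_int k - of_int (k * h) * b" by (simp add: algebra_simps)
  have z0i: "int_vec z0" by (simp add: int_vec_def z0_def)
  show ?thesis
  proof (cases "b = 0")
    case True
    then show ?thesis using az0 z0i by (intro exI[of _ N]) auto
  next
    case False
    obtain j0 where j0: "A j0 \<noteq> 0" using a0 aA by (metis of_int_0 vec_eq_iff zero_index)
    define y where "y = of_int (B * sgn (A j0)) *\<^sub>R axis j0 (1::real)"
    have e1: "a \<bullet> y = of_int (B * sgn (A j0)) * a$j0" by (simp add: y_def inner_axis)
    have e2: "sgn (A j0) * A j0 = \<bar>A j0\<bar>" by (metis abs_sgn mult.commute)
    have e3: "B * sgn (A j0) * A j0 = \<bar>A j0\<bar> * B" by (metis e2 mult.assoc mult.commute)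
    have ay: "a \<bullet> y = of_int \<bar>A j0\<bar> * b"
    proof -
      have "a \<bullet> y = of_int (B * sgn (A j0) * A j0)" using e1 aA by simp
      also have "\<dots> = of_int (\<bar>A j0\<bar> * B)" by (simp only: e3)
      finally show ?thesis using bB by simp
    qed
    define n where "n = nat (int N + \<bar>k * h\<bar>)"
    define T where "T = int n * \<bar>A j0\<bar> - k * h"
    have "1 \<le> \<bar>A j0\<bar>" using j0 by linarith
    then have "int n \<le> int n * \<bar>A j0\<bar>" by (simp add: mult_le_cancel_left1)
    then have TN: "T \<ge> int N" by (simp add: T_def n_def)
    define z where "z = z0 + of_nat n *\<^sub>R y"
    have "a \<bullet> z = of_int T * b + of_int k"
      by (simp add: z_def inner_add_right az0 ay T_def algebra_simps)
    moreover have "int_vec z" using z0i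
      by (auto simp: int_vec_def z_def y_def axis_def)
    moreover have "real (nat T) = of_int T" using TN by simp
    ultimately show ?thesis using TN by (intro exI[of _ "nat T"]) auto
  qed
qed

definition wv :: "real^'n \<Rightarrow> 'n \<Rightarrow> 'n \<Rightarrow> real^'n" where
  "wv a j0 i = a$j0 *\<^sub>R axis i 1 - a$i *\<^sub>R axis j0 1"

lemma covering:
  fixes a :: "real^'n"
  assumes ai: "int_vec a" and j0: "a$j0 \<noteq> 0" and zi: "int_vec z" and az: "a \<bullet> z = m" and ap: "a \<bullet> p = m"
  shows "\<exists>z'. int_vec z' \<and> a \<bullet> z' = m \<and> norm (p - z') \<le> (\<Sum>i\<in>UNIV. norm (wv a j0 i))"
proof -
  define y where "y = p - z"
  have ay: "a \<bullet> y = 0" using az ap by (simp add: y_def inner_diff_right)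
  define c where "c i = y$i / a$j0" for i
  have aw: "a \<bullet> wv a j0 i = 0" for i by (simp add: wv_def inner_diff_right inner_axis mult.commute)
  have wcomp: "wv a j0 i $ l = (if l = i then a$j0 else 0) - (if l = j0 then a$i else 0)" for i l
    by (simp add: wv_def axis_def)
  have sumc: "(\<Sum>i\<in>UNIV. c i * a$i) = 0"
  proof -
    have "(\<Sum>i\<in>UNIV. c i * a$i) = (\<Sum>i\<in>UNIV. a$i * y$i) / a$j0"
      by (simp add: c_def sum_divide_distrib mult.commute)
    also have "\<dots> = 0" using ay by (simp add: inner_vec_def)
    finally show ?thesis .
  qed
  have yexp: "y = (\<Sum>i\<in>UNIV. c i *\<^sub>R wv a j0 i)"
  proof (subst vec_eq_iff, intro allI)
    fix l
    have "(\<Sum>i\<in>UNIV. c i *\<^sub>R wv a j0 i) $ l = (\<Sum>i\<in>UNIV. c i * wv a j0 i $ l)"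
      by (simp add: sum_component)
    also have "\<dots> = (\<Sum>i\<in>UNIV. (if l = i then c i * a$j0 else 0) - (if l = j0 then c i * a$i else 0))"
      by (intro sum.cong) (auto simp: wcomp)
    also have "\<dots> = (\<Sum>i\<in>UNIV. if l = i then c i * a$j0 else 0) - (if l = j0 then (\<Sum>i\<in>UNIV. c i * a$i) else 0)"
      by (cases "l = j0") (simp_all add: sum_subtractf)
    also have "\<dots> = c l * a$j0" using sumc by simp
    also have "\<dots> = y $ l" using j0 sumc by (simp add: c_def)
    finally show "y $ l = (\<Sum>i\<in>UNIV. c i *\<^sub>R wv a j0 i) $ l" by simp
  qed
  define z' where "z' = z + (\<Sum>i\<in>UNIV. of_int \<lfloor>c i\<rfloor> *\<^sub>R wv a j0 i)"
  have "int_vec z'"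
    unfolding int_vec_def
  proof
    fix l
    have "wv a j0 i $ l \<in> \<int>" for i using ai by (simp add: wcomp int_vec_def)
    then show "z' $ l \<in> \<int>" using zi
      by (auto simp: z'_def sum_component int_vec_def intro!: Ints_add Ints_sum Ints_mult)
  qed
  moreover have "a \<bullet> z' = m" using az aw by (simp add: z'_def inner_add_right inner_sum_right)
  moreover have "norm (p - z') \<le> (\<Sum>i\<in>UNIV. norm (wv a j0 i))"
  proof -
    have "p - z' = y - (\<Sum>i\<in>UNIV. of_int \<lfloor>c i\<rfloor> *\<^sub>R wv a j0 i)" by (simp add: z'_def y_def)
    also have "\<dots> = (\<Sum>i\<in>UNIV. (c i - of_int \<lfloor>c i\<rfloor>) *\<^sub>R wv a j0 i)"
      by (subst yexp) (simp add: sum_subtractf scaleR_diff_left)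
    finally have eq: "p - z' = (\<Sum>i\<in>UNIV. (c i - of_int \<lfloor>c i\<rfloor>) *\<^sub>R wv a j0 i)" .
    have "norm (p - z') \<le> (\<Sum>i\<in>UNIV. norm ((c i - of_int \<lfloor>c i\<rfloor>) *\<^sub>R wv a j0 i))"
      unfolding eq by (rule norm_sum)
    also have "\<dots> \<le> (\<Sum>i\<in>UNIV. norm (wv a j0 i))"
    proof (rule sum_mono)
      fix i
      have "0 \<le> c i - of_int \<lfloor>c i\<rfloor>" "c i - of_int \<lfloor>c i\<rfloor> \<le> 1" by linarith+
      then show "norm ((c i - of_int \<lfloor>c i\<rfloor>) *\<^sub>R wv a j0 i) \<le> norm (wv a j0 i)"
        by (simp add: mult_left_le_one_le)
    qed
    finally show ?thesis .
  qed
  ultimately show ?thesis by blast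
qed

lemma TL_F_nonzero:
  fixes P F :: "(real^'n) set"
  assumes rfp: "rational_full_polytope P" and pres: "in_presentation P a b"
    and Fdef: "F = P \<inter> hyp a b" and av: "a \<bullet> v = of_int k"
  shows "\<exists>t. TL F v t \<noteq> 0"
proof -
  obtain V where V: "finite V" "P = convex hull V" and full: "aff_dim P = int CARD('n)"
    using rfp by (auto simp: rational_full_polytope_def)
  have polyP: "polytope P" using V by (auto simp: polytope_def)
  have fac: "F facet_of P" using pres Fdef by (simp add: in_presentation_def hyp_def)
  have a0: "a \<noteq> 0" and pp: "primitive_pair a b" and ai: "int_vec a"
    using pres_basic[OF pres] pres by (auto simp: in_presentation_def)
  have Fne: "F \<noteq> {}" and affF: "aff_dim F = aff_dim P - 1" using fac by (auto simp: facet_of_def)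
  have cF: "convex F" using fac by (meson facet_of_imp_face_of face_of_imp_convex)
  have FT: "F \<subseteq> {x. a \<bullet> x = b}" using Fdef by (auto simp: hyp_def)
  have "aff_dim F = aff_dim {x. a \<bullet> x = b}" using affF full a0 by simp
  then have "affine hull F = affine hull {x. a \<bullet> x = b}" using aff_dim_eq_full_gen[OF FT] by blast
  then have affhF: "affine hull F = {x. a \<bullet> x = b}" by (simp add: affine_hull_eq affine_hyperplane)
  obtain q where q: "q \<in> rel_interior F" using rel_interior_eq_empty[OF cF] Fne by blast
  then obtain r where r: "r > 0" "cball q r \<inter> affine hull F \<subseteq> F" "q \<in> F"
    by (auto simp: mem_rel_interior_cball)
  obtain j0 where j0: "a$j0 \<noteq> 0" using a0 by (metis vec_eq_iff zero_index)
  define R where "R = (\<Sum>i\<in>UNIV. norm (wv a j0 i))"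
  have R0: "R \<ge> 0" by (simp add: R_def sum_nonneg)
  define N where "N = nat \<lceil>R / r\<rceil> + 1"
  obtain t z where t: "t \<ge> N" and z: "int_vec z" "a \<bullet> z = real t * b + of_int k"
    using lattice_hyp[OF pp a0, of N k] by blast
  have tpos: "real t > 0" using t by (simp add: N_def)
  define p where "p = real t *\<^sub>R q + v"
  have aq: "a \<bullet> q = b" using r(3) FT by auto
  have ap: "a \<bullet> p = real t * b + of_int k" using aq av by (simp add: p_def inner_add_right)
  obtain z' where z': "int_vec z'" "a \<bullet> z' = real t * b + of_int k" "norm (p - z') \<le> R"
    using covering[OF ai j0 z ap] by (auto simp: R_def)
  define x where "x = inverse (real t) *\<^sub>R (z' - v)"
  have zx: "z' = real t *\<^sub>R x + v" using tpos by (simp add: x_def)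
  have ax: "a \<bullet> x = b" using z'(2) av tpos by (simp add: x_def inner_diff_right field_simps)
  have "R / r < real t"
  proof -
    have "R / r \<le> of_int \<lceil>R / r\<rceil>" by simp
    also have "\<dots> < real N" using R0 r(1) by (simp add: N_def)
    also have "\<dots> \<le> real t" using t by simp
    finally show ?thesis .
  qed
  then have Rt: "R < real t * r" using r(1) by (simp add: divide_less_eq mult.commute)
  have "norm (q - x) = norm (p - z') / real t"
  proof -
    have "p - z' = real t *\<^sub>R (q - x)" using zx by (simp add: p_def scaleR_diff_right)
    then show ?thesis using tpos by simp
  qed
  also have "\<dots> \<le> r" using z'(3) Rt tpos by (simp add: divide_le_eq mult.commute)
  finally have "x \<in> cball q r" by (simp add: dist_norm)
  then have "x \<in> F" using r(2) ax affhF by blast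
  then have "z' \<in> (\<lambda>x. real t *\<^sub>R x + v) ` F \<inter> {z. int_vec z}" using zx z'(1) by blast
  moreover have "finite ((\<lambda>x. real t *\<^sub>R x + v) ` F \<inter> {z. int_vec z})"
  proof (rule finite_lattice, rule bounded_aff_image)
    show "bounded F" using polytope_imp_bounded[OF polyP] Fdef by (metis bounded_subset inf_le1)
  qed
  ultimately have "TL F v t \<noteq> 0" by (auto simp: TL_def card_eq_0_iff)
  then show ?thesis by blast
qed

lemma image_mem:
  fixes S :: "(real^'n) set"
  assumes "t > 0"
  shows "z \<in> (\<lambda>x. t *\<^sub>R x + w) ` S \<longleftrightarrow> inverse t *\<^sub>R (z - w) \<in> S"
proof
  assume "z \<in> (\<lambda>x. t *\<^sub>R x + w) ` S"
  then obtain x where "x \<in> S" "z = t *\<^sub>R x + w" by blast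
  then show "inverse t *\<^sub>R (z - w) \<in> S" using assms by simp
next
  assume "inverse t *\<^sub>R (z - w) \<in> S"
  moreover have "z = t *\<^sub>R (inverse t *\<^sub>R (z - w)) + w" using assms by simp
  ultimately show "z \<in> (\<lambda>x. t *\<^sub>R x + w) ` S" by blast
qed

lemma memQ:
  fixes P :: "(real^'n) set"
  assumes PQ: "P = {x. \<forall>(ai,bi)\<in>Q. ai \<bullet> x \<ge> bi}" and t: "t > 0"
  shows "z \<in> (\<lambda>x. t *\<^sub>R x + w) ` P \<longleftrightarrow> (\<forall>(ai,bi)\<in>Q. ai \<bullet> z \<ge> t * bi + ai \<bullet> w)"
proof -
  have "ai \<bullet> (inverse t *\<^sub>R (z - w)) \<ge> bi \<longleftrightarrow> ai \<bullet> z \<ge> t * bi + ai \<bullet> w" for ai bi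
  proof -
    have "ai \<bullet> (inverse t *\<^sub>R (z - w)) = inverse t * (ai \<bullet> z - ai \<bullet> w)" by (simp add: inner_diff_right)
    also have "\<dots> = (ai \<bullet> z - ai \<bullet> w) / t" by (simp add: divide_inverse mult.commute)
    finally have "ai \<bullet> (inverse t *\<^sub>R (z - w)) = (ai \<bullet> z - ai \<bullet> w) / t" .
    then show ?thesis using t by (simp add: le_divide_eq algebra_simps)
  qed
  then show ?thesis using image_mem[OF t, of z w P] by (subst (asm) PQ) auto
qed

lemma TL_zero:
  fixes S :: "(real^'n) set"
  assumes "S \<noteq> {}"
  shows "TL S w 0 = (if int_vec w then 1 else 0)"
proof -
  have "(\<lambda>x. real 0 *\<^sub>R x + w) ` S = {w}" using assms by auto
  then show ?thesis by (auto simp: TL_def)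
qed

definition dl :: "real \<Rightarrow> real" where
  "dl r = (if r \<in> \<int> then 1 else min (r - of_int \<lfloor>r\<rfloor>) (of_int \<lfloor>r\<rfloor> + 1 - r))"

lemma dl_pos: "dl (r::real) > 0"
proof (cases "r \<in> \<int>")
  case False
  have "of_int \<lfloor>r\<rfloor> \<noteq> r" using False by (metis Ints_of_int)
  then have "r > of_int \<lfloor>r\<rfloor>" by (rule order_le_neq_trans[OF of_int_floor_le])
  moreover have "r < of_int \<lfloor>r\<rfloor> + 1" by linarith
  moreover have "dl r = min (r - of_int \<lfloor>r\<rfloor>) (of_int \<lfloor>r\<rfloor> + 1 - r)" using False by (simp only: dl_def if_False)
  ultimately show ?thesis by simp
qed (simp add: dl_def)

lemma frac_bounds:
  fixes r x :: real
  assumes "r \<notin> \<int>" "\<bar>x\<bar> < dl r"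
  shows "of_int \<lfloor>r\<rfloor> < r + x" "r + x < of_int \<lfloor>r\<rfloor> + 1" "of_int \<lfloor>r\<rfloor> < r" "r < of_int \<lfloor>r\<rfloor> + 1"
proof -
  have d: "dl r = min (r - of_int \<lfloor>r\<rfloor>) (of_int \<lfloor>r\<rfloor> + 1 - r)" using assms(1) by (simp only: dl_def if_False)
  have "dl r > 0" by (rule dl_pos)
  then show "of_int \<lfloor>r\<rfloor> < r + x" "r + x < of_int \<lfloor>r\<rfloor> + 1" "of_int \<lfloor>r\<rfloor> < r" "r < of_int \<lfloor>r\<rfloor> + 1"
    using assms(2) d by (auto simp: min_def split: if_splits)
qed

lemma frac_shift:
  fixes m r x :: real
  assumes m: "m \<in> \<int>" and r: "r \<notin> \<int>" and x: "\<bar>x\<bar> < dl r"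
  shows "m \<ge> r + x \<longleftrightarrow> m \<ge> r"
proof -
  obtain M where M: "m = of_int M" using m by (auto elim: Ints_cases)
  note fb = frac_bounds[OF r x]
  show ?thesis
  proof (cases "M \<le> \<lfloor>r\<rfloor>")
    case True
    then have "m \<le> of_int \<lfloor>r\<rfloor>" using M by simp
    then show ?thesis using fb by linarith
  next
    case False
    then have "m \<ge> of_int \<lfloor>r\<rfloor> + 1" using M by simp
    then show ?thesis using fb by linarith
  qed
qed

lemma frac_not_int:
  fixes r x :: real
  assumes r: "r \<notin> \<int>" and x: "\<bar>x\<bar> < dl r"
  shows "r + x \<notin> \<int>"
proof
  assume "r + x \<in> \<int>"
  then obtain M where M: "r + x = of_int M" by (auto elim: Ints_cases)
  note fb = frac_bounds[OF r x]
  then have "\<lfloor>r\<rfloor> < M" "M < \<lfloor>r\<rfloor> + 1" using M by linarith+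
  then show False by linarith
qed

lemma int_shift:
  fixes m r x :: real
  assumes "m \<in> \<int>" "r \<in> \<int>" "-1 < x" "x \<le> 0"
  shows "m \<ge> r + x \<longleftrightarrow> m \<ge> r"
proof -
  have "m - r \<in> \<int>" using assms by simp
  then obtain M where M: "m - r = of_int M" by (auto elim: Ints_cases)
  show ?thesis
  proof
    assume "m \<ge> r + x"
    then have "of_int M > (-1::real)" using M assms by linarith
    then have "M \<ge> 0" by linarith
    then show "m \<ge> r" using M by linarith
  qed (use assms in linarith)
qed

lemma int_abs_less1: "x \<in> \<int> \<Longrightarrow> \<bar>x\<bar> < 1 \<Longrightarrow> x = (0::real)"
proof -
  assume "x \<in> \<int>" "\<bar>x\<bar> < 1"
  then obtain M where M: "x = of_int M" "\<bar>of_int M\<bar> < (1::real)" by (auto elim: Ints_cases)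
  then have "\<bar>M\<bar> < 1" by (metis of_int_abs of_int_less_1_iff)
  then show "x = 0" using M by simp
qed

theorem mainTheorem12:
  fixes P F :: "(real^'n) set" and a v :: "real^'n" and b :: real and k :: int
  assumes "rational_full_polytope P"
    and "in_presentation P a b"
    and "F = P \<inter> hyp a b"
    and "v \<in> hyp a (of_int k)"
    and "\<forall>H\<in>arrangement P. H \<noteq> hyp a (of_int k) \<longrightarrow> v \<notin> H"
  shows "\<exists>\<epsilon>0>0. \<forall>\<epsilon>. 0 < \<epsilon> \<and> \<epsilon> < \<epsilon>0 \<longrightarrow>
           ((\<forall>t. int (TL P v t) - int (TL P (v + \<epsilon> *\<^sub>R a) t) = int (TL F v t))
             \<and> (\<exists>t. TL F v t \<noteq> 0))
         \<and> ((\<not> (\<exists>c::real. c > 0 \<and> - (c *\<^sub>R a) \<in> normals P)) \<longrightarrow>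
             (\<forall>t. TL P v t = TL P (v - \<epsilon> *\<^sub>R a) t))"
proof -
  note rfp = assms(1) and pres = assms(2) and Fdef = assms(3) and gen = assms(5)
  obtain Q where Qf: "finite Q" and Qp: "\<forall>(ai,bi)\<in>Q. in_presentation P ai bi"
    and PQ: "P = {x. \<forall>(ai,bi)\<in>Q. ai \<bullet> x \<ge> bi}"
    using repr[OF rfp] by blast
  have ai: "int_vec a" and bZ: "b \<in> \<int>" and a0: "a \<noteq> 0" and sub: "P \<subseteq> {x. a \<bullet> x \<ge> b}"
    and exF: "\<exists>y\<in>P. a \<bullet> y = b"
    using pres_basic[OF pres] by auto
  have av: "a \<bullet> v = of_int k" using assms(4) by (simp add: hyp_def)
  have aa: "a \<bullet> a > 0" using a0 by simp
  obtain V where V: "finite V" "P = convex hull V" using rfp by (auto simp: rational_full_polytope_def)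
  have bddP: "bounded P" using V polytope_imp_bounded by (auto simp: polytope_def)
  have Pne: "P \<noteq> {}" using exF by auto
  have Fne: "F \<noteq> {}" using exF Fdef by (auto simp: hyp_def)
  have finL: "finite ((\<lambda>x. real t *\<^sub>R x + w) ` P \<inter> {z. int_vec z})" for t w
    by (rule finite_lattice, rule bounded_aff_image, rule bddP)
  have mZ: "ai \<bullet> z - real t * bi \<in> \<int>" if "(ai,bi) \<in> Q" "int_vec z" for ai bi z t
  proof -
    have "int_vec ai" "bi \<in> \<int>" using pres_basic Qp that(1) by fastforce+
    then show ?thesis using int_inner that(2) by (intro Ints_diff Ints_mult) auto
  qed
  have par: "\<exists>l. ai = l *\<^sub>R a \<and> l \<noteq> 0 \<and> (l > 0 \<longrightarrow> bi = l * b)"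
    if aibi: "(ai,bi) \<in> Q" and Z: "ai \<bullet> v \<in> \<int>" for ai bi
  proof -
    have presi: "in_presentation P ai bi" using Qp aibi by blast
    then have nrm: "ai \<in> normals P" by (auto simp: normals_def)
    obtain m where m: "ai \<bullet> v = of_int m" using Z by (auto elim: Ints_cases)
    have "hyp ai (of_int m) \<in> arrangement P" using nrm by (auto simp: arrangement_def)
    moreover have "v \<in> hyp ai (of_int m)" using m by (simp add: hyp_def)
    ultimately have Heq: "hyp ai (of_int m) = hyp a (of_int k)" using gen by blast
    have "ai \<bullet> y = 0" if "a \<bullet> y = 0" for y
    proof -
      have "v + y \<in> hyp a (of_int k)" using av that by (simp add: hyp_def inner_add_right)
      then have "v + y \<in> hyp ai (of_int m)" using Heq by simp
      then have "ai \<bullet> (v + y) = of_int m" by (simp add: hyp_def)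
      then show ?thesis using m by (simp add: inner_add_right)
    qed
    then have aieq: "ai = ((ai \<bullet> a) / (a \<bullet> a)) *\<^sub>R a" by (rule orth_parallel[OF a0])
    define l where "l = (ai \<bullet> a) / (a \<bullet> a)"
    have "ai \<noteq> 0" using pres_basic[OF presi] by auto
    then have l0: "l \<noteq> 0" using aieq by (auto simp: l_def)
    have "l > 0 \<longrightarrow> bi = l * b"
    proof
      assume lp: "l > 0"
      obtain y where y: "y \<in> P" "ai \<bullet> y = bi" using pres_basic[OF presi] by blast
      have "a \<bullet> y \<ge> b" using sub y by auto
      then have lb: "l * b \<le> l * (a \<bullet> y)" using lp by (simp add: mult_left_mono)
      have "bi \<ge> l * b" using y aieq lb by (simp add: l_def[symmetric])
      obtain x where x: "x \<in> P" "a \<bullet> x = b" using exF by blast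
      have "ai \<bullet> x \<ge> bi" using pres_basic(5)[OF presi] x by auto
      then have "l * b \<ge> bi" using x aieq by (simp add: l_def[symmetric])
      with \<open>bi \<ge> l * b\<close> show "bi = l * b" by simp
    qed
    then show ?thesis using aieq l0 l_def by blast
  qed
  define E where "E = insert (1 / (a \<bullet> a + 1))
     ((\<lambda>(ai,bi). dl (ai \<bullet> v) / (\<bar>ai \<bullet> a\<bar> + 1)) ` Q \<union> (\<lambda>j. dl (v$j) / (\<bar>a$j\<bar> + 1)) ` UNIV)"
  define e0 where "e0 = Min E"
  have Efin: "finite E" using Qf by (simp add: E_def)
  have Epos: "\<forall>e\<in>E. e > 0" using aa dl_pos by (auto simp: E_def intro!: divide_pos_pos add_nonneg_pos)
  have e0pos: "e0 > 0" using Efin Epos by (simp add: e0_def E_def)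
  have e0le: "e0 \<le> e" if "e \<in> E" for e using Efin that by (simp add: e0_def)
  have E1: "\<bar>s\<bar> * (a \<bullet> a) < 1" if "\<bar>s\<bar> < e0" for s
  proof -
    have "\<bar>s\<bar> < 1 / (a \<bullet> a + 1)" using that e0le[of "1 / (a \<bullet> a + 1)"] by (simp add: E_def)
    then have "\<bar>s\<bar> * (a \<bullet> a + 1) < 1" using aa by (simp add: less_divide_eq)
    then show ?thesis by (simp add: algebra_simps)
  qed
  have E2: "\<bar>s * (ai \<bullet> a)\<bar> < dl (ai \<bullet> v)" if "\<bar>s\<bar> < e0" "(ai,bi) \<in> Q" for s ai bi
  proof -
    have "\<bar>s\<bar> < dl (ai \<bullet> v) / (\<bar>ai \<bullet> a\<bar> + 1)"
      using that e0le[of "dl (ai \<bullet> v) / (\<bar>ai \<bullet> a\<bar> + 1)"] by (force simp: E_def)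
    then have "\<bar>s\<bar> * (\<bar>ai \<bullet> a\<bar> + 1) < dl (ai \<bullet> v)" by (simp add: less_divide_eq add_nonneg_pos)
    moreover have "\<bar>s\<bar> * \<bar>ai \<bullet> a\<bar> \<le> \<bar>s\<bar> * (\<bar>ai \<bullet> a\<bar> + 1)" by (simp add: mult_left_mono)
    ultimately show ?thesis by (simp add: abs_mult)
  qed
  have E3: "\<not> int_vec (v + s *\<^sub>R a)" if "\<bar>s\<bar> < e0" "s \<noteq> 0" for s
  proof -
    have sj: "\<bar>s * a$j\<bar> < dl (v$j)" for j
    proof -
      have "\<bar>s\<bar> < dl (v$j) / (\<bar>a$j\<bar> + 1)"
        using that e0le[of "dl (v$j) / (\<bar>a$j\<bar> + 1)"] by (force simp: E_def)
      then have "\<bar>s\<bar> * (\<bar>a$j\<bar> + 1) < dl (v$j)" by (simp add: less_divide_eq add_nonneg_pos)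
      moreover have "\<bar>s\<bar> * \<bar>a$j\<bar> \<le> \<bar>s\<bar> * (\<bar>a$j\<bar> + 1)" by (simp add: mult_left_mono)
      ultimately show ?thesis by (simp add: abs_mult)
    qed
    show ?thesis
    proof (cases "int_vec v")
      case True
      obtain j0 where j0: "a$j0 \<noteq> 0" using a0 by (metis vec_eq_iff zero_index)
      have "\<bar>s * a$j0\<bar> < 1" using sj[of j0] True by (simp add: dl_def int_vec_def)
      moreover have "s * a$j0 \<noteq> 0" using j0 that(2) by simp
      ultimately have "s * a$j0 \<notin> \<int>" using int_abs_less1 by blast
      then show ?thesis using True
        by (auto simp: int_vec_def)
    next
      case False
      then obtain j where j: "v$j \<notin> \<int>" by (auto simp: int_vec_def)
      then have "v$j + s * a$j \<notin> \<int>" using frac_not_int sj by blast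
      then show ?thesis by (auto simp: int_vec_def)
    qed
  qed
  have subt: "a \<bullet> z \<ge> real t * b + a \<bullet> w" if "z \<in> (\<lambda>x. real t *\<^sub>R x + w) ` P" "t > 0" for z w t
  proof -
    have "inverse (real t) *\<^sub>R (z - w) \<in> P" using image_mem[of "real t" z w P] that by simp
    then have "a \<bullet> (inverse (real t) *\<^sub>R (z - w)) \<ge> b" using sub by auto
    moreover have "a \<bullet> (inverse (real t) *\<^sub>R (z - w)) = inverse (real t) * (a \<bullet> z - a \<bullet> w)"
      by (simp only: inner_scaleR_right inner_diff_right)
    ultimately have "b \<le> inverse (real t) * (a \<bullet> z - a \<bullet> w)" by linarith
    then have "(a \<bullet> z - a \<bullet> w) / real t \<ge> b" by (simp add: divide_inverse mult.commute)
    then show ?thesis using that(2) by (simp add: le_divide_eq algebra_simps)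
  qed
  have mQ: "z \<in> (\<lambda>x. real t *\<^sub>R x + w) ` P \<longleftrightarrow> (\<forall>(ai,bi)\<in>Q. ai \<bullet> z \<ge> real t * bi + ai \<bullet> w)"
    if "t > 0" for z w t using memQ[OF PQ, of "real t"] that by simp
  show ?thesis
  proof (rule exI[of _ e0], rule conjI[OF e0pos], intro allI impI)
    fix \<epsilon> assume eps: "0 < \<epsilon> \<and> \<epsilon> < e0"
    then have eps1: "\<bar>\<epsilon>\<bar> < e0" "\<bar>-\<epsilon>\<bar> < e0" by auto
    have P1: "\<forall>t. int (TL P v t) - int (TL P (v + \<epsilon> *\<^sub>R a) t) = int (TL F v t)"
    proof
      fix t :: nat
      show "int (TL P v t) - int (TL P (v + \<epsilon> *\<^sub>R a) t) = int (TL F v t)"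
      proof (cases "t = 0")
        case True
        have "\<not> int_vec (v + \<epsilon> *\<^sub>R a)" using E3 eps by auto
        then show ?thesis using True TL_zero[OF Pne] TL_zero[OF Fne] by simp
      next
        case False
        then have t0: "t > 0" by simp
        define A where "A = (\<lambda>x. real t *\<^sub>R x + v) ` P \<inter> {z. int_vec z}"
        define B where "B = (\<lambda>x. real t *\<^sub>R x + (v + \<epsilon> *\<^sub>R a)) ` P \<inter> {z. int_vec z}"
        define C where "C = (\<lambda>x. real t *\<^sub>R x + v) ` F \<inter> {z. int_vec z}"
        have BA: "B \<subseteq> A"
        proof
          fix z assume z: "z \<in> B"
          have "ai \<bullet> z \<ge> real t * bi + ai \<bullet> v" if aibi: "(ai,bi) \<in> Q" for ai bi
          proof -
            have h: "ai \<bullet> z - real t * bi \<ge> ai \<bullet> v + \<epsilon> * (ai \<bullet> a)"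
              using z aibi mQ[OF t0] by (auto simp: B_def inner_add_right)
            have mz: "ai \<bullet> z - real t * bi \<in> \<int>" using mZ aibi z by (auto simp: B_def)
            show ?thesis
            proof (cases "ai \<bullet> v \<in> \<int>")
              case False
              then show ?thesis using frac_shift[OF mz False E2[OF eps1(1) aibi]] h by simp
            next
              case True
              obtain l where l: "ai = l *\<^sub>R a" "l \<noteq> 0" "l > 0 \<longrightarrow> bi = l * b" using par[OF aibi True] by blast
              show ?thesis
              proof (cases "l > 0")
                case True
                then have "\<epsilon> * (ai \<bullet> a) \<ge> 0" using l eps aa by simp
                then show ?thesis using h by simp
              next
                case lneg: False
                have "\<bar>\<epsilon> * (ai \<bullet> a)\<bar> < 1" using E2[OF eps1(1) aibi] True by (simp add: dl_def)
                moreover have "\<epsilon> * (ai \<bullet> a) \<le> 0" using l lneg eps aa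
                  by (simp add: mult_nonneg_nonpos mult_nonpos_nonneg)
                ultimately show ?thesis using int_shift[OF mz True, of "\<epsilon> * (ai \<bullet> a)"] h by simp
              qed
            qed
          qed
          then show "z \<in> A" using z mQ[OF t0] by (auto simp: A_def B_def)
        qed
        have AB: "A - B = C"
        proof
          show "A - B \<subseteq> C"
          proof
            fix z assume z: "z \<in> A - B"
            have zA: "z \<in> (\<lambda>x. real t *\<^sub>R x + v) ` P" "int_vec z" using z by (auto simp: A_def)
            have "a \<bullet> z = real t * b + of_int k"
            proof (rule ccontr)
              assume ne: "a \<bullet> z \<noteq> real t * b + of_int k"
              have ge: "a \<bullet> z \<ge> real t * b + of_int k" using subt[OF zA(1) t0] av by simp
              have "a \<bullet> z - real t * b - of_int k \<in> \<int>"
                using int_inner[OF ai zA(2)] bZ by (intro Ints_diff Ints_mult) auto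
              then obtain M where M: "a \<bullet> z - real t * b - of_int k = of_int M" by (metis Ints_cases)
              then have "M > 0" using ne ge by linarith
              then have ge1: "a \<bullet> z \<ge> real t * b + of_int k + 1" using M by linarith
              have "z \<in> B"
              proof -
                have "ai \<bullet> z \<ge> real t * bi + ai \<bullet> (v + \<epsilon> *\<^sub>R a)" if aibi: "(ai,bi) \<in> Q" for ai bi
                proof -
                  have h: "ai \<bullet> z - real t * bi \<ge> ai \<bullet> v"
                    using zA(1) aibi mQ[OF t0] by auto
                  have mz: "ai \<bullet> z - real t * bi \<in> \<int>" using mZ aibi zA(2) by auto
                  have goal: "ai \<bullet> z - real t * bi \<ge> ai \<bullet> v + \<epsilon> * (ai \<bullet> a)"
                  proof (cases "ai \<bullet> v \<in> \<int>")
                    case False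
                    then show ?thesis using frac_shift[OF mz False E2[OF eps1(1) aibi]] h by simp
                  next
                    case True
                    obtain l where l: "ai = l *\<^sub>R a" "l \<noteq> 0" "l > 0 \<longrightarrow> bi = l * b" using par[OF aibi True] by blast
                    show ?thesis
                    proof (cases "l > 0")
                      case lpos: True
                      have "\<epsilon> * (a \<bullet> a) < 1" using E1[OF eps1(1)] eps by simp
                      then have "a \<bullet> z \<ge> real t * b + of_int k + \<epsilon> * (a \<bullet> a)" using ge1 by linarith
                      then have "l * (a \<bullet> z) \<ge> l * (real t * b + of_int k + \<epsilon> * (a \<bullet> a))"
                        using lpos by (simp add: mult_left_mono)
                      then show ?thesis using l lpos av by (simp add: algebra_simps)
                    next
                      case lneg: False
                      have "\<bar>\<epsilon> * (ai \<bullet> a)\<bar> < 1" using E2[OF eps1(1) aibi] True by (simp add: dl_def)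
                      moreover have "\<epsilon> * (ai \<bullet> a) \<le> 0" using l lneg eps aa
                        by (simp add: mult_nonneg_nonpos mult_nonpos_nonneg)
                      ultimately show ?thesis using int_shift[OF mz True, of "\<epsilon> * (ai \<bullet> a)"] h by simp
                    qed
                  qed
                  then show ?thesis by (simp add: inner_add_right)
                qed
                then show ?thesis using zA mQ[OF t0] by (auto simp: B_def)
              qed
              then show False using z by blast
            qed
            then have "inverse (real t) *\<^sub>R (z - v) \<in> hyp a b"
              using av t0 by (simp add: hyp_def inner_diff_right field_simps)
            moreover have "inverse (real t) *\<^sub>R (z - v) \<in> P" using image_mem[of "real t" z v P] zA t0 by simp
            ultimately have "z \<in> (\<lambda>x. real t *\<^sub>R x + v) ` F"
              using image_mem[of "real t" z v F] t0 Fdef by simp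
            then show "z \<in> C" using zA by (simp add: C_def)
          qed
          show "C \<subseteq> A - B"
          proof
            fix z assume z: "z \<in> C"
            then obtain x where x: "x \<in> F" "z = real t *\<^sub>R x + v" and zi: "int_vec z" by (auto simp: C_def)
            have zA: "z \<in> A" using x zi Fdef by (auto simp: A_def)
            have az: "a \<bullet> z = real t * b + of_int k" using x Fdef av by (simp add: hyp_def inner_add_right)
            have "z \<notin> B"
            proof
              assume "z \<in> B"
              then have "a \<bullet> z \<ge> real t * b + a \<bullet> (v + \<epsilon> *\<^sub>R a)" using subt t0 by (auto simp: B_def)
              then have "a \<bullet> z \<ge> real t * b + of_int k + \<epsilon> * (a \<bullet> a)" using av by (simp add: inner_add_right)
              moreover have "\<epsilon> * (a \<bullet> a) > 0" using eps aa by simp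
              ultimately show False using az by simp
            qed
            then show "z \<in> A - B" using zA by blast
          qed
        qed
        have fA: "finite A" using finL by (simp add: A_def)
        have "card (A - B) = card A - card B" using BA fA by (simp add: card_Diff_subset finite_subset)
        moreover have "card B \<le> card A" using BA fA by (simp add: card_mono)
        ultimately have "int (card A) - int (card B) = int (card C)" using AB by simp
        then show ?thesis by (simp add: TL_def A_def B_def C_def)
      qed
    qed
    have P2: "\<exists>t. TL F v t \<noteq> 0" using TL_F_nonzero[OF rfp pres Fdef av] .
    have P3: "(\<not> (\<exists>c::real. c > 0 \<and> - (c *\<^sub>R a) \<in> normals P)) \<longrightarrow> (\<forall>t. TL P v t = TL P (v - \<epsilon> *\<^sub>R a) t)"
    proof
    assume hyp2: "\<not> (\<exists>c::real. c > 0 \<and> - (c *\<^sub>R a) \<in> normals P)"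
    have noneg: "\<not> (ai = l *\<^sub>R a \<and> l < 0)" if "(ai,bi) \<in> Q" for ai bi l
    proof
      assume "ai = l *\<^sub>R a \<and> l < 0"
      moreover have "ai \<in> normals P" using Qp that by (auto simp: normals_def)
      ultimately have "- ((-l) *\<^sub>R a) \<in> normals P \<and> -l > 0" by simp
      then show False using hyp2 by blast
    qed
    show "\<forall>t. TL P v t = TL P (v - \<epsilon> *\<^sub>R a) t"
    proof
      fix t :: nat
      show "TL P v t = TL P (v - \<epsilon> *\<^sub>R a) t"
      proof (cases "t = 0")
        case True
        have nv: "\<not> int_vec v"
        proof
          assume iv: "int_vec v"
          have all: "\<forall>(ai,bi)\<in>Q. \<exists>l>0. ai = l *\<^sub>R a \<and> bi = l * b"
          proof (clarify)
            fix ai bi assume aibi: "(ai,bi) \<in> Q"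
            have "int_vec ai" using pres_basic Qp aibi by fastforce
            then have "ai \<bullet> v \<in> \<int>" using int_inner iv by blast
            then obtain l where l: "ai = l *\<^sub>R a" "l \<noteq> 0" "l > 0 \<longrightarrow> bi = l * b" using par[OF aibi] by blast
            have "l > 0" using noneg[OF aibi, of l] l by linarith
            then show "\<exists>l>0. ai = l *\<^sub>R a \<and> bi = l * b" using l by blast
          qed
          obtain y0 where y0: "y0 \<in> P" "a \<bullet> y0 = b" using exF by blast
          have ray: "y0 + s *\<^sub>R a \<in> P" if "s \<ge> 0" for s
          proof -
            have "a \<bullet> (y0 + s *\<^sub>R a) \<ge> b" using y0 that aa by (simp add: inner_add_right)
            then have "\<forall>(ai,bi)\<in>Q. ai \<bullet> (y0 + s *\<^sub>R a) \<ge> bi"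
              using all by (auto simp: mult_left_mono)
            then show ?thesis using PQ by blast
          qed
          obtain M where M: "\<And>x. x \<in> P \<Longrightarrow> norm x \<le> M" using bddP by (auto simp: bounded_iff)
          define s where "s = (M + norm y0 + 1) / norm a"
          have "norm a > 0" using a0 by simp
          moreover have M0: "M \<ge> 0" using M y0 norm_ge_zero order_trans by blast
          ultimately have s0: "s \<ge> 0" by (simp add: s_def)
          have "norm (s *\<^sub>R a) = M + norm y0 + 1" using \<open>norm a > 0\<close> s0 M0 by (simp add: s_def)
          moreover have "norm (s *\<^sub>R a) \<le> norm (y0 + s *\<^sub>R a) + norm y0"
            by (metis add_diff_cancel_left' norm_triangle_ineq4 add.commute)
          moreover have "norm (y0 + s *\<^sub>R a) \<le> M" using M ray s0 by blast
          ultimately show False by linarith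
        qed
        have "\<not> int_vec (v - \<epsilon> *\<^sub>R a)" using E3[of "-\<epsilon>"] eps by simp
        then show ?thesis using True TL_zero[OF Pne] nv by simp
      next
        case False
        then have t0: "t > 0" by simp
        have zeq: "z \<in> (\<lambda>x. real t *\<^sub>R x + v) ` P \<longleftrightarrow> z \<in> (\<lambda>x. real t *\<^sub>R x + (v - \<epsilon> *\<^sub>R a)) ` P"
          if zi: "int_vec z" for z
        proof -
          have iff: "ai \<bullet> z \<ge> real t * bi + ai \<bullet> v \<longleftrightarrow> ai \<bullet> z \<ge> real t * bi + ai \<bullet> (v - \<epsilon> *\<^sub>R a)"
            if aibi: "(ai,bi) \<in> Q" for ai bi
          proof -
            have mz: "ai \<bullet> z - real t * bi \<in> \<int>" using mZ aibi zi by auto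
            have e: "ai \<bullet> (v - \<epsilon> *\<^sub>R a) = ai \<bullet> v + (-\<epsilon>) * (ai \<bullet> a)" by (simp add: inner_diff_right)
            have "ai \<bullet> z - real t * bi \<ge> ai \<bullet> v + (-\<epsilon>) * (ai \<bullet> a) \<longleftrightarrow> ai \<bullet> z - real t * bi \<ge> ai \<bullet> v"
            proof (cases "ai \<bullet> v \<in> \<int>")
              case False
              then show ?thesis using frac_shift[OF mz False E2[OF eps1(2) aibi]] by simp
            next
              case True
              obtain l where l: "ai = l *\<^sub>R a" "l \<noteq> 0" "l > 0 \<longrightarrow> bi = l * b" using par[OF aibi True] by blast
              have lpos: "l > 0" using noneg[OF aibi, of l] l by linarith
              have "\<bar>(-\<epsilon>) * (ai \<bullet> a)\<bar> < 1" using E2[OF eps1(2) aibi] True by (simp add: dl_def)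
              moreover have "(-\<epsilon>) * (ai \<bullet> a) \<le> 0" using l lpos eps aa by simp
              ultimately show ?thesis using int_shift[OF mz True, of "(-\<epsilon>) * (ai \<bullet> a)"] by simp
            qed
            then show ?thesis using e by linarith
          qed
          have ball: "(\<forall>(ai,bi)\<in>Q. ai \<bullet> z \<ge> real t * bi + ai \<bullet> v) =
                      (\<forall>(ai,bi)\<in>Q. ai \<bullet> z \<ge> real t * bi + ai \<bullet> (v - \<epsilon> *\<^sub>R a))"
          proof (rule ball_cong[OF refl])
            fix p assume p: "p \<in> Q"
            obtain ai bi where pe: "p = (ai,bi)" by (cases p)
            show "(case p of (ai,bi) \<Rightarrow> ai \<bullet> z \<ge> real t * bi + ai \<bullet> v) =
                  (case p of (ai,bi) \<Rightarrow> ai \<bullet> z \<ge> real t * bi + ai \<bullet> (v - \<epsilon> *\<^sub>R a))"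
              using iff[of ai bi] p pe by simp
          qed
          show ?thesis by (simp only: mQ[OF t0, of z v] mQ[OF t0, of z "v - \<epsilon> *\<^sub>R a"] ball)
        qed
        have "(\<lambda>x. real t *\<^sub>R x + v) ` P \<inter> {z. int_vec z} = (\<lambda>x. real t *\<^sub>R x + (v - \<epsilon> *\<^sub>R a)) ` P \<inter> {z. int_vec z}"
        proof (rule set_eqI)
          fix z
          show "z \<in> (\<lambda>x. real t *\<^sub>R x + v) ` P \<inter> {z. int_vec z} \<longleftrightarrow> z \<in> (\<lambda>x. real t *\<^sub>R x + (v - \<epsilon> *\<^sub>R a)) ` P \<inter> {z. int_vec z}"
          proof (cases "int_vec z")
            case True
            then show ?thesis using zeq[OF True] by (simp only: Int_iff mem_Collect_eq simp_thms)
          next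
            case False
            then show ?thesis by (simp only: Int_iff mem_Collect_eq simp_thms)
          qed
        qed
        then show ?thesis by (simp add: TL_def)
      qed
    qed
    qed
    show "((\<forall>t. int (TL P v t) - int (TL P (v + \<epsilon> *\<^sub>R a) t) = int (TL F v t))
             \<and> (\<exists>t. TL F v t \<noteq> 0))
         \<and> ((\<not> (\<exists>c::real. c > 0 \<and> - (c *\<^sub>R a) \<in> normals P)) \<longrightarrow>
             (\<forall>t. TL P v t = TL P (v - \<epsilon> *\<^sub>R a) t))"
      by (rule conjI[OF conjI[OF P1 P2] P3])
  qed
qed


end
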